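(* Let $n$ be a positive integer such that $p=18(2n+1)^2+1$ is prime. Then for every primitive root $g$ of $\mathbb F_p$, $$(-1)^{|\tau_g|}=(-1)^{n+1}.$$
   Context: Let $p$ be an odd prime, $\mathbb F_p$ the field with $p$ elements, identified with $\{0,1,\ldots,p-1\}$, and $\mathcal H_p=\{1,2,\ldots,(p-1)/2\}\subseteq\mathbb F_p$. For a primitive root $g$ of $\mathbb F_p$, $\tau_g$ is the permutation of $\mathcal H_p$ given by $\tau_g(b)=g^b$ if $g^b\in\mathcal H_p$ and $\tau_g(b)=-g^b$ if $g^b\notin\mathcal H_p$ (for $b\in\mathcal H_p$). For a permutation $\pi$, $(-1)^{|\pi|}$ denotes its sign. *)

theory Defs
  imports "HOL-Number_Theory.Number_Theory" "HOL-Combinatorics.Combinatorics"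
begin

text \<open>Elements of F_p are identified with {0,...,p-1}; H_p = {1,...,(p-1)/2}.\<close>
definition half_set :: "nat \<Rightarrow> nat set" where
  "half_set p = {1..(p - 1) div 2}"

definition tau :: "nat \<Rightarrow> nat \<Rightarrow> nat \<Rightarrow> nat" where
  "tau p g b = (let r = g ^ b mod p in if r \<in> half_set p then r else p - r)"

end

theory Submission
  imports Defs
begin
definition prs :: "('i \<Rightarrow> 'i \<Rightarrow> bool) \<Rightarrow> 'i set \<Rightarrow> ('i \<times> 'i) set" where
  "prs R A = {(i,j). i \<in> A \<and> j \<in> A \<and> R i j}"

definition VV :: "('i \<Rightarrow> 'i \<Rightarrow> bool) \<Rightarrow> 'i set \<Rightarrow> ('i \<Rightarrow> int) \<Rightarrow> int" where
  "VV R A y = (\<Prod>q\<in>prs R A. y (snd q) - y (fst q))"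

lemma finite_prs: "finite A \<Longrightarrow> finite (prs R A)"
  unfolding prs_def by (rule finite_subset[of _ "A \<times> A"]) auto

lemma prod_neg_const: "finite X \<Longrightarrow> (\<Prod>q\<in>X. - (f q :: int)) = (-1) ^ card X * (\<Prod>q\<in>X. f q)"
  by (induction X rule: finite_induct) auto

lemma VV_two_orders:
  assumes fin: "finite A"
    and t1: "\<And>i j. i \<in> A \<Longrightarrow> j \<in> A \<Longrightarrow> i \<noteq> j \<Longrightarrow> R1 i j \<or> R1 j i"
    and t2: "\<And>i j. i \<in> A \<Longrightarrow> j \<in> A \<Longrightarrow> i \<noteq> j \<Longrightarrow> R2 i j \<or> R2 j i"
    and a1: "\<And>i j. i \<in> A \<Longrightarrow> j \<in> A \<Longrightarrow> R1 i j \<Longrightarrow> \<not> R1 j i \<and> i \<noteq> j"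
    and a2: "\<And>i j. i \<in> A \<Longrightarrow> j \<in> A \<Longrightarrow> R2 i j \<Longrightarrow> \<not> R2 j i \<and> i \<noteq> j"
  shows "VV R1 A y = (-1) ^ card {(i,j). i\<in>A \<and> j\<in>A \<and> R1 i j \<and> R2 j i} * VV R2 A y"
proof -
  define X where "X = {(i,j). i\<in>A \<and> j\<in>A \<and> R1 i j \<and> R2 j i}"
  define Y where "Y = {(i,j). i\<in>A \<and> j\<in>A \<and> R1 i j \<and> R2 i j}"
  define sw where "sw = (\<lambda>q::'a\<times>'a. (snd q, fst q))"
  have finX: "finite X" unfolding X_def by (rule finite_subset[of _ "A \<times> A"]) (auto simp: fin)
  have finY: "finite Y" unfolding Y_def by (rule finite_subset[of _ "A \<times> A"]) (auto simp: fin)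
  have e1: "prs R1 A = Y \<union> X"
  proof (intro equalityI subsetI)
    fix q assume "q \<in> prs R1 A"
    then obtain i j where q: "q=(i,j)" "i\<in>A" "j\<in>A" "R1 i j" unfolding prs_def by blast
    hence "i\<noteq>j" using a1 by blast
    hence "R2 i j \<or> R2 j i" using t2 q by blast
    thus "q \<in> Y \<union> X" using q unfolding X_def Y_def by blast
  qed (auto simp: prs_def X_def Y_def)
  have d1: "Y \<inter> X = {}"
  proof -
    { fix i j assume "(i,j) \<in> Y" "(i,j) \<in> X"
      then have False using a2[of i j] unfolding X_def Y_def by auto }
    thus ?thesis by auto
  qed
  have e2: "prs R2 A = Y \<union> sw ` X"
  proof (intro equalityI subsetI)
    fix q assume "q \<in> prs R2 A"
    then obtain i j where q: "q = (i,j)" "i \<in> A" "j \<in> A" "R2 i j" unfolding prs_def by blast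
    then have "i \<noteq> j" using a2 by blast
    then have "R1 i j \<or> R1 j i" using t1 q by blast
    moreover have "R1 j i \<Longrightarrow> q \<in> sw ` X"
      by (rule image_eqI[of _ _ "(j,i)"]) (use q in \<open>auto simp: sw_def X_def\<close>)
    ultimately show "q \<in> Y \<union> sw ` X" using q unfolding Y_def by blast
  next
    fix q assume "q \<in> Y \<union> sw ` X"
    then show "q \<in> prs R2 A" unfolding Y_def X_def sw_def prs_def by auto
  qed
  have d2: "Y \<inter> sw ` X = {}"
  proof -
    { fix i j assume "(i,j) \<in> Y" "(i,j) \<in> sw ` X"
      then have "R1 i j" "R1 j i" "i \<in> A" "j \<in> A" unfolding X_def Y_def sw_def by auto
      then have False using a1[of i j] by auto }
    thus ?thesis by auto
  qed
  have injsw: "inj_on sw X" unfolding sw_def inj_on_def by auto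
  have "VV R1 A y = (\<Prod>q\<in>Y. y (snd q) - y (fst q)) * (\<Prod>q\<in>X. y (snd q) - y (fst q))"
    unfolding VV_def e1 by (rule prod.union_disjoint[OF finY finX d1])
  moreover have "VV R2 A y = (\<Prod>q\<in>Y. y (snd q) - y (fst q)) * (\<Prod>q\<in>sw ` X. y (snd q) - y (fst q))"
    unfolding VV_def e2 by (rule prod.union_disjoint[OF finY _ d2]) (use finX in auto)
  moreover have "(\<Prod>q\<in>sw ` X. y (snd q) - y (fst q)) = (\<Prod>q\<in>X. - (y (snd q) - y (fst q)))"
    by (subst prod.reindex[OF injsw]) (simp add: sw_def)
  moreover have "\<dots> = (-1) ^ card X * (\<Prod>q\<in>X. y (snd q) - y (fst q))"
    by (rule prod_neg_const[OF finX])
  moreover have "((-1::int) ^ card X) * ((-1) ^ card X) = 1" by (cases "even (card X)") auto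
  ultimately show ?thesis unfolding X_def[symmetric]
    by (metis (no_types, lifting) mult.assoc mult.commute mult.left_neutral)
qed

lemma VV_reindex:
  assumes bij: "bij_betw \<phi> A B" and ord: "\<And>i j. i \<in> A \<Longrightarrow> j \<in> A \<Longrightarrow> R i j = S (\<phi> i) (\<phi> j)"
  shows "VV R A (\<lambda>i. y (\<phi> i)) = VV S B y"
proof -
  define m where "m = (\<lambda>q. (\<phi> (fst q), \<phi> (snd q)))"
  have inj: "inj_on \<phi> A" and img: "\<phi> ` A = B" using bij by (auto simp: bij_betw_def)
  have injm: "inj_on m (prs R A)"
    unfolding m_def inj_on_def prs_def using inj by (auto simp: inj_on_def)
  have im: "m ` prs R A = prs S B"
  proof (intro equalityI subsetI)
    fix q assume "q \<in> m ` prs R A"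
    then show "q \<in> prs S B" unfolding m_def prs_def using ord img by auto
  next
    fix q assume "q \<in> prs S B"
    then obtain u v where q: "q = (u,v)" "u \<in> B" "v \<in> B" "S u v" unfolding prs_def by blast
    obtain i where i: "i \<in> A" "u = \<phi> i" using q img by blast
    obtain j where j: "j \<in> A" "v = \<phi> j" using q img by blast
    have "(i,j) \<in> prs R A" using i j q ord[of i j] unfolding prs_def by auto
    moreover have "q = m (i,j)" using i j q unfolding m_def by auto
    ultimately show "q \<in> m ` prs R A" by blast
  qed
  have "VV S B y = (\<Prod>q\<in>m ` prs R A. y (snd q) - y (fst q))" unfolding VV_def im ..
  also have "\<dots> = (\<Prod>q\<in>prs R A. y (\<phi> (snd q)) - y (\<phi> (fst q)))"
    by (subst prod.reindex[OF injm]) (simp add: m_def)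
  finally show ?thesis unfolding VV_def by simp
qed

definition Esym :: "int \<Rightarrow> nat \<Rightarrow> nat set \<Rightarrow> int" where
  "Esym b k A = (\<Sum>S\<in>{S. S \<subseteq> A \<and> card S = k}. \<Prod>i\<in>S. b ^ i)"

lemma E_expand:
  assumes fin: "finite A"
  shows "(\<Prod>i\<in>A. t - c * b ^ i) = (\<Sum>k\<le>card A. t ^ (card A - k) * (-c) ^ k * Esym b k A)"
proof -
  have "(\<Prod>i\<in>A. t - c * b ^ i) = (\<Prod>i\<in>A. (- c * b ^ i) + t)" by simp
  also have "\<dots> = (\<Sum>X\<in>Pow A. (\<Prod>i\<in>X. - c * b ^ i) * (\<Prod>i\<in>A - X. t))"
    by (rule prod_add[OF fin])
  also have "\<dots> = (\<Sum>X\<in>Pow A. t ^ (card A - card X) * (-c) ^ card X * (\<Prod>i\<in>X. b ^ i))"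
  proof (rule sum.cong[OF refl])
    fix X assume X: "X \<in> Pow A"
    then have "finite X" using fin finite_subset by blast
    have "(\<Prod>i\<in>X. - c * b ^ i) = (\<Prod>i\<in>X. - c) * (\<Prod>i\<in>X. b ^ i)"
      by (rule prod.distrib)
    then have "(\<Prod>i\<in>X. - c * b ^ i) = (-c) ^ card X * (\<Prod>i\<in>X. b ^ i)"
      by simp
    moreover have "(\<Prod>i\<in>A - X. t) = t ^ (card A - card X)"
      using X fin by (simp add: card_Diff_subset finite_subset)
    ultimately show "(\<Prod>i\<in>X. - c * b ^ i) * (\<Prod>i\<in>A - X. t) =
        t ^ (card A - card X) * (-c) ^ card X * (\<Prod>i\<in>X. b ^ i)" by simp
  qed
  also have "\<dots> = (\<Sum>k\<le>card A. \<Sum>X\<in>{X \<in> Pow A. card X = k}.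
                     t ^ (card A - card X) * (-c) ^ card X * (\<Prod>i\<in>X. b ^ i))"
    by (rule sum.group[symmetric]) (use fin card_mono in auto)
  also have "\<dots> = (\<Sum>k\<le>card A. t ^ (card A - k) * (-c) ^ k * Esym b k A)"
  proof (rule sum.cong[OF refl])
    fix k assume "k \<in> {..card A}"
    have "(\<Sum>X\<in>{X \<in> Pow A. card X = k}. t ^ (card A - card X) * (-c) ^ card X * (\<Prod>i\<in>X. b ^ i))
        = (\<Sum>X\<in>{X. X \<subseteq> A \<and> card X = k}. t ^ (card A - k) * (-c) ^ k * (\<Prod>i\<in>X. b ^ i))"
      by (rule sum.cong) auto
    also have "\<dots> = t ^ (card A - k) * (-c) ^ k * Esym b k A"
      unfolding Esym_def by (simp add: sum_distrib_left)
    finally show "(\<Sum>X\<in>{X \<in> Pow A. card X = k}. t ^ (card A - card X) * (-c) ^ card X * (\<Prod>i\<in>X. b ^ i))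
        = t ^ (card A - k) * (-c) ^ k * Esym b k A" .
  qed
  finally show ?thesis .
qed

lemma Esym_0: "finite A \<Longrightarrow> Esym b 0 A = 1"
proof -
  assume "finite A"
  then have "\<And>S. S \<subseteq> A \<Longrightarrow> finite S" using finite_subset by blast
  then have "{S. S \<subseteq> A \<and> card S = 0} = {{}}" by auto
  thus ?thesis unfolding Esym_def by simp
qed

lemma Esym_full: "finite A \<Longrightarrow> Esym b (card A) A = (\<Prod>i\<in>A. b ^ i)"
proof -
  assume "finite A"
  then have "{S. S \<subseteq> A \<and> card S = card A} = {A}" by (auto dest: card_subset_eq)
  thus ?thesis unfolding Esym_def by simp
qed

lemma Esym_insert:
  assumes fin: "finite A" and a: "a \<notin> A"
  shows "Esym b (Suc k) (insert a A) = Esym b (Suc k) A + b ^ a * Esym b k A"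
proof -
  define K1 where "K1 = {S. S \<subseteq> A \<and> card S = Suc k}"
  define K0 where "K0 = {S. S \<subseteq> A \<and> card S = k}"
  have finPow: "finite (Pow (insert a A))" using fin by simp
  have fK1: "finite K1" unfolding K1_def by (rule finite_subset[OF _ finPow]) auto
  have fK0: "finite K0" unfolding K0_def by (rule finite_subset[OF _ finPow]) auto
  have eq: "{S. S \<subseteq> insert a A \<and> card S = Suc k} = K1 \<union> insert a ` K0"
  proof (intro equalityI subsetI)
    fix S assume S: "S \<in> {S. S \<subseteq> insert a A \<and> card S = Suc k}"
    then have fS: "finite S" using fin finite_subset by (metis (no_types, lifting) finite_insert mem_Collect_eq)
    show "S \<in> K1 \<union> insert a ` K0"
    proof (cases "a \<in> S")
      case True
      have "S - {a} \<in> K0" unfolding K0_def using S True fS by auto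
      moreover have "S = insert a (S - {a})" using True by auto
      ultimately show ?thesis by blast
    next
      case False
      then have "S \<in> K1" unfolding K1_def using S by auto
      then show ?thesis by blast
    qed
  next
    fix S assume S: "S \<in> K1 \<union> insert a ` K0"
    show "S \<in> {S. S \<subseteq> insert a A \<and> card S = Suc k}"
    proof (cases "S \<in> K1")
      case True then show ?thesis unfolding K1_def by auto
    next
      case False
      then obtain T where T: "T \<in> K0" "S = insert a T" using S by blast
      then have "finite T" "a \<notin> T" using fin a finite_subset unfolding K0_def by auto
      then show ?thesis using T unfolding K0_def by auto
    qed
  qed
  have disj: "K1 \<inter> insert a ` K0 = {}" unfolding K1_def using a by auto
  have inj: "inj_on (insert a) K0"
  proof (rule inj_onI)
    fix S T assume ST: "S \<in> K0" "T \<in> K0" "insert a S = insert a T"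
    then have "a \<notin> S" "a \<notin> T" using a unfolding K0_def by auto
    then show "S = T" using ST(3) by (metis Diff_insert_absorb)
  qed
  have "Esym b (Suc k) (insert a A) = (\<Sum>S\<in>K1. \<Prod>i\<in>S. b ^ i) + (\<Sum>S\<in>insert a ` K0. \<Prod>i\<in>S. b ^ i)"
    unfolding Esym_def eq by (rule sum.union_disjoint[OF fK1 _ disj]) (use fK0 in auto)
  also have "(\<Sum>S\<in>insert a ` K0. \<Prod>i\<in>S. b ^ i) = (\<Sum>S\<in>K0. \<Prod>i\<in>insert a S. b ^ i)"
    by (rule sum.reindex[OF inj, unfolded comp_def])
  also have "\<dots> = (\<Sum>S\<in>K0. b ^ a * (\<Prod>i\<in>S. b ^ i))"
  proof (rule sum.cong[OF refl])
    fix S assume "S \<in> K0"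
    then have "finite S" "a \<notin> S" using fin a finite_subset unfolding K0_def by auto
    then show "(\<Prod>i\<in>insert a S. b ^ i) = b ^ a * (\<Prod>i\<in>S. b ^ i)" by simp
  qed
  finally show ?thesis unfolding Esym_def K1_def K0_def by (simp add: sum_distrib_left)
qed

lemma double_sum_lessThan: "2 * (\<Sum>i<(n::nat). i) = n * (n - 1)"
  by (induction n) (auto simp: algebra_simps)

locale cyc =
  fixes p :: int and b :: int and x :: nat
  assumes p: "prime p" and bx: "[b ^ x = 1] (mod p)"
      and bk: "\<And>k. 0 < k \<Longrightarrow> k < x \<Longrightarrow> \<not> [b ^ k = 1] (mod p)" and xodd: "odd x"
begin

lemma xpos: "x > 0" using xodd by (cases x) auto

lemma bpow_mod: "[b ^ i = b ^ (i mod x)] (mod p)"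
proof -
  have "b ^ i = b ^ (x * (i div x) + i mod x)" by simp
  also have "\<dots> = (b ^ x) ^ (i div x) * b ^ (i mod x)"
    by (simp only: power_add power_mult)
  also have "[\<dots> = 1 ^ (i div x) * b ^ (i mod x)] (mod p)"
    by (intro cong_mult cong_pow bx cong_refl)
  finally show ?thesis by simp
qed

lemma bpow_dvd: "x dvd i \<Longrightarrow> [b ^ i = 1] (mod p)"
  using bpow_mod[of i] by simp

lemma prod_b: "[(\<Prod>i<x. b ^ i) = 1] (mod p)"
proof -
  obtain m where "x = 2 * m + 1" using xodd oddE by blast
  then have m: "x - 1 = 2 * m" by simp
  have "2 * (\<Sum>i<x. i) = x * (2 * m)" using double_sum_lessThan[of x] m by simp
  then have "(\<Sum>i<x. i) = x * m" by simp
  then have "(\<Prod>i<x. b ^ i) = b ^ (x * m)" by (simp add: power_sum[symmetric])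
  then show ?thesis using bpow_dvd[of "x*m"] by simp
qed

lemma E_zero:
  assumes k: "0 < k" "k < x"
  shows "[Esym b k {..<x} = 0] (mod p)"
proof -
  define s where "s = (\<lambda>i. Suc i mod x)"
  define K where "K = {S. S \<subseteq> {..<x} \<and> card S = k}"
  have injs: "inj_on s {..<x}"
  proof (rule inj_onI)
    fix i j assume ij: "i \<in> {..<x}" "j \<in> {..<x}" "s i = s j"
    then have "[Suc i = Suc j] (mod x)" unfolding s_def cong_def by simp
    then have "[i = j] (mod x)" using cong_add_lcancel_nat[of 1 i j x] by simp
    then show "i = j" using ij by (simp add: cong_def)
  qed
  have simg: "s ` {..<x} \<subseteq> {..<x}" unfolding s_def using xpos by auto
  have fK: "finite K" unfolding K_def by (rule finite_subset[of _ "Pow {..<x}"]) auto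
  have injS: "inj_on (image s) K"
    unfolding K_def by (rule inj_on_subset[OF inj_on_image_Pow[OF injs]]) auto
  have imgK: "image s ` K \<subseteq> K"
  proof
    fix T assume "T \<in> image s ` K"
    then obtain S where S: "S \<in> K" "T = s ` S" by blast
    then have "inj_on s S" using injs unfolding K_def by (auto intro: inj_on_subset)
    then show "T \<in> K" using S simg unfolding K_def by (auto simp: card_image)
  qed
  have KK: "image s ` K = K" by (rule endo_inj_surj[OF fK imgK injS])
  have "Esym b k {..<x} = (\<Sum>T\<in>image s ` K. \<Prod>i\<in>T. b ^ i)" unfolding Esym_def K_def[symmetric] KK ..
  also have "\<dots> = (\<Sum>S\<in>K. \<Prod>i\<in>s ` S. b ^ i)" by (rule sum.reindex[OF injS, unfolded comp_def])
  also have "\<dots> = (\<Sum>S\<in>K. \<Prod>i\<in>S. b ^ s i)"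
  proof (rule sum.cong[OF refl])
    fix S assume "S \<in> K"
    then have "inj_on s S" using injs unfolding K_def by (auto intro: inj_on_subset)
    then show "(\<Prod>i\<in>s ` S. b ^ i) = (\<Prod>i\<in>S. b ^ s i)" by (rule prod.reindex[unfolded comp_def])
  qed
  also have "[\<dots> = (\<Sum>S\<in>K. \<Prod>i\<in>S. b * b ^ i)] (mod p)"
  proof (rule cong_sum, rule cong_prod)
    fix S and i :: nat assume "i \<in> S"
    have "[b ^ s i = b ^ Suc i] (mod p)" unfolding s_def using bpow_mod[of "Suc i"] by (simp add: cong_sym)
    then show "[b ^ s i = b * b ^ i] (mod p)" by simp
  qed
  also have "(\<Sum>S\<in>K. \<Prod>i\<in>S. b * b ^ i) = (\<Sum>S\<in>K. b ^ k * (\<Prod>i\<in>S. b ^ i))"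
  proof (rule sum.cong[OF refl])
    fix S assume "S \<in> K"
    then have "card S = k" unfolding K_def by auto
    then show "(\<Prod>i\<in>S. b * b ^ i) = b ^ k * (\<Prod>i\<in>S. b ^ i)" by (simp add: prod.distrib)
  qed
  also have "\<dots> = b ^ k * Esym b k {..<x}" unfolding Esym_def K_def by (simp add: sum_distrib_left)
  finally have "[Esym b k {..<x} = b ^ k * Esym b k {..<x}] (mod p)" .
  then have "p dvd (b ^ k - 1) * Esym b k {..<x}"
    by (simp add: cong_iff_dvd_diff algebra_simps dvd_diff_commute)
  then have "p dvd (b ^ k - 1) \<or> p dvd Esym b k {..<x}" using p prime_dvd_mult_iff by blast
  moreover have "\<not> p dvd (b ^ k - 1)" using bk[OF k] by (simp add: cong_iff_dvd_diff)
  ultimately show ?thesis by (simp add: cong_0_iff)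
qed

lemma L: "[(\<Prod>i<x. t - c * b ^ i) = t ^ x - c ^ x] (mod p)"
proof -
  have "(\<Prod>i<x. t - c * b ^ i) = (\<Sum>k\<le>x. t ^ (x - k) * (-c) ^ k * Esym b k {..<x})"
    using E_expand[of "{..<x}" t c b] by simp
  also have "[\<dots> = (\<Sum>k\<le>x. (if k = 0 then t ^ x else 0) + (if k = x then (-c) ^ x else 0))] (mod p)"
  proof (rule cong_sum)
    fix k assume k: "k \<in> {..x}"
    consider "k = 0" | "k = x" | "0 < k \<and> k < x" using k by fastforce
    then show "[t ^ (x - k) * (-c) ^ k * Esym b k {..<x} =
          (if k = 0 then t ^ x else 0) + (if k = x then (-c) ^ x else 0)] (mod p)"
    proof cases
      case 1 then show ?thesis using xpos by (simp add: Esym_0)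
    next
      case 2
      have "Esym b x {..<x} = (\<Prod>i<x. b ^ i)" using Esym_full[of "{..<x}" b] by simp
      then have "[Esym b x {..<x} = 1] (mod p)" using prod_b by simp
      then have "[t ^ (x - k) * (-c) ^ k * Esym b k {..<x} = 1 * (-c) ^ x * 1] (mod p)"
        using 2 by (intro cong_mult cong_refl) simp_all
      then show ?thesis using 2 xpos by simp
    next
      case 3
      then have "[t ^ (x - k) * (-c) ^ k * Esym b k {..<x} = t ^ (x - k) * (-c) ^ k * 0] (mod p)"
        using E_zero[of k] by (intro cong_mult cong_refl) auto
      then show ?thesis using 3 by simp
    qed
  qed
  also have "(\<Sum>k\<le>x. (if k = 0 then t ^ x else 0) + (if k = x then (-c) ^ x else 0)) = t ^ x + (-c) ^ x"
    by (simp add: sum.distrib)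
  also have "\<dots> = t ^ x - c ^ x" using xodd by simp
  finally show ?thesis .
qed

lemma K: "[(\<Prod>i\<in>{1..<x}. 1 - b ^ i) = int x] (mod p)"
proof -
  have A0: "{..<x} = insert 0 {1..<x}" using xpos by auto
  have Erec: "k < x \<Longrightarrow> [Esym b k {1..<x} = (-1) ^ k] (mod p)" for k
  proof (induction k)
    case 0 then show ?case by (simp add: Esym_0)
  next
    case (Suc k)
    then have IH: "[Esym b k {1..<x} = (-1) ^ k] (mod p)" by simp
    have "Esym b (Suc k) {..<x} = Esym b (Suc k) {1..<x} + b ^ 0 * Esym b k {1..<x}"
      unfolding A0 by (rule Esym_insert) auto
    moreover have "[Esym b (Suc k) {..<x} = 0] (mod p)" using E_zero[of "Suc k"] Suc.prems by simp
    ultimately have e: "[Esym b (Suc k) {1..<x} + Esym b k {1..<x} = 0] (mod p)" by simp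
    have "Esym b (Suc k) {1..<x} = (Esym b (Suc k) {1..<x} + Esym b k {1..<x}) - Esym b k {1..<x}" by simp
    also have "[\<dots> = 0 - (-1) ^ k] (mod p)" by (intro cong_diff e IH)
    finally show ?case by simp
  qed
  have "(\<Prod>i\<in>{1..<x}. 1 - 1 * b ^ i) = (\<Sum>k\<le>x - 1. 1 ^ (x - 1 - k) * (-1) ^ k * Esym b k {1..<x})"
    using E_expand[of "{1..<x}" 1 1 b] by simp
  also have "[\<dots> = (\<Sum>k\<le>x - 1. 1)] (mod p)"
  proof (rule cong_sum)
    fix k assume "k \<in> {..x - 1}"
    then have "k < x" using xpos by auto
    then have "[1 ^ (x - 1 - k) * (-1) ^ k * Esym b k {1..<x} = 1 * (-1) ^ k * (-1) ^ k] (mod p)"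
      using Erec by (intro cong_mult cong_refl) auto
    moreover have "(1::int) * (-1) ^ k * (-1) ^ k = 1" by (cases "even k") auto
    ultimately show "[1 ^ (x - 1 - k) * (-1) ^ k * Esym b k {1..<x} = 1] (mod p)" by simp
  qed
  also have "(\<Sum>k\<le>x - 1. 1::int) = int x" using xpos by simp
  finally show ?thesis by simp
qed

lemma Mi:
  assumes i: "i < x"
  shows "[(\<Prod>j\<in>{..<x} - {i}. b ^ i - b ^ j) = (b ^ i) ^ (x - 1) * int x] (mod p)"
proof -
  define f where "f = (\<lambda>k. (i + k) mod x)"
  have injf: "inj_on f {1..<x}"
  proof (rule inj_onI)
    fix k k' assume kk: "k \<in> {1..<x}" "k' \<in> {1..<x}" "f k = f k'"
    then have "[i + k = i + k'] (mod x)" unfolding f_def cong_def by simp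
    then have "[k = k'] (mod x)" using cong_add_lcancel_nat by blast
    then show "k = k'" using kk by (simp add: cong_def)
  qed
  have sub: "f ` {1..<x} \<subseteq> {..<x} - {i}"
  proof
    fix j assume "j \<in> f ` {1..<x}"
    then obtain k where k: "k \<in> {1..<x}" "j = f k" by blast
    have "j < x" using k xpos unfolding f_def by simp
    moreover have "j \<noteq> i"
    proof
      assume "j = i"
      then have "[i + k = i + 0] (mod x)" using k i unfolding f_def cong_def by simp
      then have "[k = 0] (mod x)" using cong_add_lcancel_nat by blast
      then show False using k by (simp add: cong_def)
    qed
    ultimately show "j \<in> {..<x} - {i}" by simp
  qed
  have "card (f ` {1..<x}) = card ({..<x} - {i})"
    using card_image[OF injf] i by simp
  then have img: "f ` {1..<x} = {..<x} - {i}"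
    by (intro card_subset_eq[OF _ sub]) auto
  have bij: "bij_betw f {1..<x} ({..<x} - {i})" by (rule bij_betw_imageI[OF injf img])
  have "(\<Prod>j\<in>{..<x} - {i}. b ^ i - b ^ j) = (\<Prod>k\<in>{1..<x}. b ^ i - b ^ f k)"
    by (rule prod.reindex_bij_betw[OF bij, symmetric])
  also have "[\<dots> = (\<Prod>k\<in>{1..<x}. b ^ i * (1 - b ^ k))] (mod p)"
  proof (rule cong_prod)
    fix k assume "k \<in> {1..<x}"
    have "[b ^ f k = b ^ (i + k)] (mod p)" unfolding f_def using bpow_mod[of "i+k"] by (simp add: cong_sym)
    then have "[b ^ i - b ^ f k = b ^ i - b ^ (i + k)] (mod p)" by (intro cong_diff cong_refl)
    then show "[b ^ i - b ^ f k = b ^ i * (1 - b ^ k)] (mod p)" by (simp add: power_add algebra_simps)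
  qed
  also have "(\<Prod>k\<in>{1..<x}. b ^ i * (1 - b ^ k)) = (b ^ i) ^ (x - 1) * (\<Prod>k\<in>{1..<x}. 1 - b ^ k)"
    by (simp add: prod.distrib)
  also have "[\<dots> = (b ^ i) ^ (x - 1) * int x] (mod p)" by (intro cong_mult cong_refl K)
  finally show ?thesis .
qed

lemma M: "[VV (<) {..<x} (\<lambda>q. b ^ q) ^ 2 = (-1) ^ card (prs (<) {..<x}) * int x ^ x] (mod p)"
proof -
  define A where "A = {..<x}"
  define y where "y = (\<lambda>q::nat. b ^ q)"
  define R2 where "R2 = (\<lambda>i j::nat. j < i)"
  define C where "C = card (prs (<) A)"
  have fA: "finite A" unfolding A_def by simp
  have "VV (<) A y = (-1) ^ card {(i,j). i\<in>A \<and> j\<in>A \<and> i < j \<and> R2 j i} * VV R2 A y"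
    by (rule VV_two_orders[OF fA]) (auto simp: R2_def)
  moreover have "{(i,j). i\<in>A \<and> j\<in>A \<and> i < j \<and> R2 j i} = prs (<) A" unfolding prs_def R2_def by auto
  ultimately have v1: "VV (<) A y = (-1) ^ C * VV R2 A y" unfolding C_def by simp
  define Off where "Off = (SIGMA i:A. A - {i})"
  have off: "Off = prs (<) A \<union> prs R2 A" unfolding Off_def prs_def R2_def by auto
  have disj: "prs (<) A \<inter> prs R2 A = {}" unfolding prs_def R2_def by auto
  have "VV (<) A y * VV R2 A y = (\<Prod>q\<in>Off. y (snd q) - y (fst q))"
    unfolding VV_def off by (rule prod.union_disjoint[symmetric]) (use fA finite_prs disj in auto)
  also have "\<dots> = (\<Prod>(i,j)\<in>Off. y j - y i)" by (simp add: case_prod_beta)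
  also have "\<dots> = (\<Prod>i\<in>A. \<Prod>j\<in>A - {i}. y j - y i)"
    unfolding Off_def by (rule prod.Sigma[symmetric]) (use fA in auto)
  also have "\<dots> = (\<Prod>i\<in>A. \<Prod>j\<in>A - {i}. y i - y j)"
  proof (rule prod.cong[OF refl])
    fix i assume i: "i \<in> A"
    have "(\<Prod>j\<in>A - {i}. y j - y i) = (\<Prod>j\<in>A - {i}. - (y i - y j))" by simp
    also have "\<dots> = (-1) ^ card (A - {i}) * (\<Prod>j\<in>A - {i}. y i - y j)"
      by (rule prod_neg_const) (use fA in auto)
    also have "card (A - {i}) = x - 1" using i unfolding A_def by simp
    finally have "(\<Prod>j\<in>A - {i}. y j - y i) = (-1) ^ (x - 1) * (\<Prod>j\<in>A - {i}. y i - y j)" .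
    moreover have "even (x - 1)" using xodd xpos by simp
    ultimately show "(\<Prod>j\<in>A - {i}. y j - y i) = (\<Prod>j\<in>A - {i}. y i - y j)" by simp
  qed
  also have "[\<dots> = (\<Prod>i\<in>A. (b ^ i) ^ (x - 1) * int x)] (mod p)"
    by (rule cong_prod) (use Mi in \<open>auto simp: A_def y_def\<close>)
  also have "(\<Prod>i\<in>A. (b ^ i) ^ (x - 1) * int x) = (\<Prod>i<x. b ^ i) ^ (x - 1) * int x ^ x"
    unfolding A_def by (simp add: prod.distrib prod_power_distrib)
  also have "[\<dots> = 1 ^ (x - 1) * int x ^ x] (mod p)" by (intro cong_mult cong_pow prod_b cong_refl)
  finally have pr: "[VV (<) A y * VV R2 A y = int x ^ x] (mod p)" by simp
  have "VV (<) A y ^ 2 = (-1) ^ C * (VV (<) A y * VV R2 A y)" using v1 by (simp add: power2_eq_square)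
  also have "[\<dots> = (-1) ^ C * int x ^ x] (mod p)" by (intro cong_mult cong_refl pr)
  finally show ?thesis unfolding A_def y_def C_def .
qed

end


lemma sum_lessThan_plus1: "(\<Sum>r<n. r + 1) = (\<Sum>r<n. r) + (n::nat)"
  by (induction n) auto

lemma card_prs_less: "2 * card (prs (<) {..<n}) = n * (n - 1)"
proof (induction n)
  case 0 then show ?case by (simp add: prs_def)
next
  case (Suc n)
  have e: "prs (<) {..<Suc n} = prs (<) {..<n} \<union> (\<lambda>i. (i, n)) ` {..<n}"
    unfolding prs_def by (auto simp: less_Suc_eq)
  have d: "prs (<) {..<n} \<inter> (\<lambda>i. (i, n)) ` {..<n} = {}" unfolding prs_def by auto
  have "card (prs (<) {..<Suc n}) = card (prs (<) {..<n}) + card ((\<lambda>i. (i, n)) ` {..<n})"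
    unfolding e by (rule card_Un_disjoint) (use d finite_prs[of "{..<n}"] in auto)
  also have "card ((\<lambda>i. (i, n)) ` {..<n}) = n" by (subst card_image) (auto simp: inj_on_def)
  finally show ?case using Suc.IH by (cases n) (auto simp: algebra_simps)
qed

locale cyc2 =
  fixes p :: int and a :: int and x :: nat
  assumes p: "prime p" and ax: "[a ^ (x * x) = 1] (mod p)"
      and ak: "\<And>k. 0 < k \<Longrightarrow> k < x * x \<Longrightarrow> \<not> [a ^ k = 1] (mod p)" and xodd: "odd x"
begin

definition "b = a ^ x"

lemma cycb: "cyc p b x"
proof
  show "prime p" by (rule p)
  show "[b ^ x = 1] (mod p)" unfolding b_def using ax by (simp add: power_mult[symmetric])
  show "odd x" by (rule xodd)
  fix k assume k: "0 < k" "k < x"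
  have "0 < x * k" "x * k < x * x" using k by auto
  then show "\<not> [b ^ k = 1] (mod p)" unfolding b_def using ak by (simp add: power_mult[symmetric])
qed

interpretation B: cyc p b x by (rule cycb)

lemma N_value: "[VV (<) {1..x*x} (\<lambda>e. a ^ e) = int x ^ (x * x)] (mod p)"
proof -
  obtain m where xm: "x = 2 * m + 1" using xodd oddE by blast
  define G where "G = {..<x} \<times> {..<x}"
  define P where "P = prs (<) {..<x}"
  define C where "C = card P"
  define V where "V = VV (<) {..<x} (\<lambda>q. b ^ q)"
  have C: "C = x * m" using card_prs_less[of x] xm unfolding C_def P_def by simp
  have fG: "finite G" unfolding G_def by simp
  have fP: "finite P" unfolding P_def by (rule finite_prs) simp
  define \<phi> where "\<phi> = (\<lambda>u::nat\<times>nat. fst u * x + snd u + 1)"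
  define R1 where "R1 = (\<lambda>u v::nat\<times>nat. fst u < fst v \<or> (fst u = fst v \<and> snd u < snd v))"
  define R2 where "R2 = (\<lambda>u v::nat\<times>nat. snd u < snd v \<or> (snd u = snd v \<and> fst u < fst v))"
  define y where "y = (\<lambda>u. a ^ \<phi> u)"
  have lexless: "q * x + r < q' * x + r'" if "q < q'" "r < x" for q q' r r' :: nat
  proof -
    have "q * x + r < q * x + x" using that by simp
    also have "\<dots> = Suc q * x" by simp
    also have "\<dots> \<le> q' * x" using that by (intro mult_right_mono) auto
    finally show ?thesis by simp
  qed
  have ord1: "R1 u v = (\<phi> u < \<phi> v)" if "u \<in> G" "v \<in> G" for u v
  proof -
    obtain q r q' r' where uv: "u = (q,r)" "v = (q',r')" by (cases u, cases v) auto
    have rr: "r < x" "r' < x" using that uv unfolding G_def by auto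
    show ?thesis
    proof (cases q q' rule: linorder_cases)
      case less then show ?thesis using lexless[of q q' r r'] less rr uv unfolding R1_def \<phi>_def by auto
    next
      case equal then show ?thesis using uv unfolding R1_def \<phi>_def by auto
    next
      case greater then show ?thesis using lexless[of q' q r' r] greater rr uv unfolding R1_def \<phi>_def by auto
    qed
  qed
  have injphi: "inj_on \<phi> G"
  proof (rule inj_onI)
    fix u v assume uv: "u \<in> G" "v \<in> G" "\<phi> u = \<phi> v"
    then have "\<not> \<phi> u < \<phi> v" "\<not> \<phi> v < \<phi> u" by auto
    then have "\<not> R1 u v" "\<not> R1 v u" using ord1 uv by auto
    then have f: "fst u = fst v" unfolding R1_def by linarith
    then have "snd u = snd v" using \<open>\<not> R1 u v\<close> \<open>\<not> R1 v u\<close> unfolding R1_def by linarith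
    then show "u = v" using f by (simp add: prod_eq_iff)
  qed
  have imgphi: "\<phi> ` G = {1..x*x}"
  proof (intro equalityI subsetI)
    fix e assume "e \<in> \<phi> ` G"
    then obtain q r where qr: "q < x" "r < x" "e = q * x + r + 1" unfolding G_def \<phi>_def by auto
    have "q * x + r < (x - 1) * x + x" using qr lexless[of q "x-1" r] by (cases "q = x - 1") auto
    also have "\<dots> = x * x" using qr by (cases x) auto
    finally show "e \<in> {1..x*x}" using qr by auto
  next
    fix e assume e: "e \<in> {1..x*x}"
    define q where "q = (e - 1) div x"
    define r where "r = (e - 1) mod x"
    have "r < x" unfolding r_def using B.xpos by simp
    moreover have "q < x" unfolding q_def using e B.xpos by (auto simp: div_less_iff_less_mult)
    moreover have "e = \<phi> (q, r)" unfolding \<phi>_def q_def r_def using e by simp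
    ultimately show "e \<in> \<phi> ` G" unfolding G_def by blast
  qed
  have bijphi: "bij_betw \<phi> G {1..x*x}" by (rule bij_betw_imageI[OF injphi imgphi])
  have step1: "VV (<) {1..x*x} (\<lambda>e. a ^ e) = VV R1 G y"
    unfolding y_def by (rule VV_reindex[where S="(<)", OF bijphi ord1, symmetric])
  have step2: "VV R1 G y = (-1) ^ card {(u,v). u\<in>G \<and> v\<in>G \<and> R1 u v \<and> R2 v u} * VV R2 G y"
    by (rule VV_two_orders[OF fG]) (auto simp: R1_def R2_def prod_eq_iff)
  define \<psi> where "\<psi> = (\<lambda>(w::(nat\<times>nat)\<times>(nat\<times>nat)). ((fst (fst w), snd (snd w)), (snd (fst w), fst (snd w))))"
  have injpsi: "inj_on \<psi> (P \<times> P)" unfolding inj_on_def \<psi>_def by (auto simp: prod_eq_iff)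
  have Xeq: "{(u,v). u\<in>G \<and> v\<in>G \<and> R1 u v \<and> R2 v u} = \<psi> ` (P \<times> P)"
  proof (intro equalityI subsetI)
    fix w assume "w \<in> {(u,v). u\<in>G \<and> v\<in>G \<and> R1 u v \<and> R2 v u}"
    then obtain q r q' r' where w: "w = ((q,r),(q',r'))" "q < x" "r < x" "q' < x" "r' < x"
      "q < q'" "r' < r" unfolding G_def R1_def R2_def by auto
    have "((q,q'),(r',r)) \<in> P \<times> P" unfolding P_def prs_def using w by auto
    moreover have "w = \<psi> ((q,q'),(r',r))" unfolding \<psi>_def w by simp
    ultimately show "w \<in> \<psi> ` (P \<times> P)" by blast
  next
    fix w assume "w \<in> \<psi> ` (P \<times> P)"
    then show "w \<in> {(u,v). u\<in>G \<and> v\<in>G \<and> R1 u v \<and> R2 v u}"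
      unfolding \<psi>_def P_def prs_def G_def R1_def R2_def by auto
  qed
  have cardX: "card {(u,v). u\<in>G \<and> v\<in>G \<and> R1 u v \<and> R2 v u} = C * C"
    unfolding Xeq C_def by (simp add: card_image[OF injpsi] card_cartesian_product)
  define S where "S = (\<lambda>(r, qq). ((fst qq, r), (snd qq, r))) ` ({..<x} \<times> P)"
  define T where "T = (\<lambda>(rr, qq). ((fst qq, fst rr), (snd qq, snd rr))) ` (P \<times> ({..<x} \<times> {..<x}))"
  have injS: "inj_on (\<lambda>(r, qq). ((fst qq, r), (snd qq, r))) ({..<x} \<times> P)"
    unfolding inj_on_def by (auto simp: prod_eq_iff)
  have injT: "inj_on (\<lambda>(rr, qq). ((fst qq, fst rr), (snd qq, snd rr))) (P \<times> ({..<x} \<times> {..<x}))"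
    unfolding inj_on_def by (auto simp: prod_eq_iff)
  have prsR2: "prs R2 G = S \<union> T"
  proof (intro equalityI subsetI)
    fix w assume "w \<in> prs R2 G"
    then obtain q r q' r' where w: "w = ((q,r),(q',r'))" "q < x" "r < x" "q' < x" "r' < x"
      "r < r' \<or> (r = r' \<and> q < q')" unfolding prs_def G_def R2_def by auto
    show "w \<in> S \<union> T"
    proof (cases "r = r'")
      case True
      then have "q < q'" using w by auto
      then have "(r, (q,q')) \<in> {..<x} \<times> P" unfolding P_def prs_def using w by auto
      then have "w \<in> S" unfolding S_def w(1) True by (auto intro!: image_eqI[of _ _ "(r', (q,q'))"])
      then show ?thesis by blast
    next
      case False
      then have "r < r'" using w by auto
      then have "((r,r'), (q,q')) \<in> P \<times> ({..<x} \<times> {..<x})" unfolding P_def prs_def using w by auto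
      then have "w \<in> T" unfolding T_def w(1) by (auto intro!: image_eqI[of _ _ "((r,r'), (q,q'))"])
      then show ?thesis by blast
    qed
  next
    fix w assume "w \<in> S \<union> T"
    then show "w \<in> prs R2 G" unfolding S_def T_def P_def prs_def G_def R2_def by auto
  qed
  have disjST: "S \<inter> T = {}" unfolding S_def T_def P_def prs_def by auto
  have fS: "finite S" unfolding S_def using fP by simp
  have fT: "finite T" unfolding T_def using fP by simp
  have VR2: "VV R2 G y = (\<Prod>w\<in>S. y (snd w) - y (fst w)) * (\<Prod>w\<in>T. y (snd w) - y (fst w))"
    unfolding VV_def prsR2 by (rule prod.union_disjoint[OF fS fT disjST])
  have ypow: "y (q, r) = b ^ q * a ^ (r + 1)" for q r
    unfolding y_def \<phi>_def b_def by (simp add: power_add power_mult[symmetric] mult.commute)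
  have "(\<Prod>w\<in>S. y (snd w) - y (fst w)) =
      (\<Prod>z\<in>{..<x} \<times> P. y (snd (snd z), fst z) - y (fst (snd z), fst z))"
    unfolding S_def by (subst prod.reindex[OF injS]) (simp add: case_prod_beta)
  also have "\<dots> = (\<Prod>r<x. \<Prod>qq\<in>P. y (snd qq, r) - y (fst qq, r))"
    unfolding prod.cartesian_product by (simp add: case_prod_beta)
  also have "\<dots> = (\<Prod>r<x. \<Prod>qq\<in>P. a ^ (r + 1) * (b ^ snd qq - b ^ fst qq))"
    by (simp add: ypow algebra_simps)
  also have "\<dots> = (\<Prod>r<x. (a ^ (r + 1)) ^ C * V)"
    unfolding V_def VV_def C_def P_def by (simp add: prod.distrib)
  also have "\<dots> = (\<Prod>r<x. (a ^ (r + 1)) ^ C) * (\<Prod>r<x. V)"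
    by (rule prod.distrib)
  also have "\<dots> = (\<Prod>r<x. a ^ (r + 1)) ^ C * V ^ x"
    by (simp only: prod_power_distrib[symmetric]) simp
  finally have Spart: "(\<Prod>w\<in>S. y (snd w) - y (fst w)) = (\<Prod>r<x. a ^ (r + 1)) ^ C * V ^ x" .
  have inner: "[(\<Prod>q'<x. y (q', r') - y (q, r)) = b * (b ^ r' - b ^ r)] (mod p)" for q r r'
  proof -
    define w where "w = b ^ q * a ^ (r + 1)"
    define w' where "w' = a ^ (r' + 1)"
    have "(\<Prod>q'<x. y (q', r') - y (q, r)) = (\<Prod>q'<x. - (w - w' * b ^ q'))"
      unfolding w_def w'_def by (simp add: ypow algebra_simps)
    also have "\<dots> = (-1) ^ x * (\<Prod>q'<x. w - w' * b ^ q')" by (subst prod_neg_const) auto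
    also have "[\<dots> = (-1) ^ x * (w ^ x - w' ^ x)] (mod p)" by (intro cong_mult cong_refl B.L)
    also have "(-1) ^ x * (w ^ x - w' ^ x) = w' ^ x - w ^ x" using xodd by simp
    also have "w' ^ x = b * b ^ r'" unfolding w'_def b_def by (simp add: power_mult[symmetric] algebra_simps)
    also have "w ^ x = (b ^ x) ^ q * (b * b ^ r)"
      unfolding w_def b_def by (simp add: power_mult_distrib power_mult[symmetric] algebra_simps)
    also have "[b * b ^ r' - (b ^ x) ^ q * (b * b ^ r) = b * b ^ r' - 1 ^ q * (b * b ^ r)] (mod p)"
      by (intro cong_diff cong_mult cong_pow cong_refl B.bx)
    finally show ?thesis by (simp add: algebra_simps)
  qed
  have "(\<Prod>w\<in>T. y (snd w) - y (fst w)) =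
      (\<Prod>z\<in>P \<times> ({..<x} \<times> {..<x}). y (snd (snd z), snd (fst z)) - y (fst (snd z), fst (fst z)))"
    unfolding T_def by (subst prod.reindex[OF injT]) (simp add: case_prod_beta)
  also have "\<dots> = (\<Prod>rr\<in>P. \<Prod>q<x. \<Prod>q'<x. y (q', snd rr) - y (q, fst rr))"
    unfolding prod.cartesian_product by (simp add: case_prod_beta)
  also have "[\<dots> = (\<Prod>rr\<in>P. \<Prod>q<x. b * (b ^ snd rr - b ^ fst rr))] (mod p)"
    by (intro cong_prod inner)
  also have "(\<Prod>rr\<in>P. \<Prod>q<x. b * (b ^ snd rr - b ^ fst rr)) = (\<Prod>rr\<in>P. b ^ x * (b ^ snd rr - b ^ fst rr) ^ x)"
    by (simp add: power_mult_distrib)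
  also have "[\<dots> = (\<Prod>rr\<in>P. 1 * (b ^ snd rr - b ^ fst rr) ^ x)] (mod p)"
    by (intro cong_prod cong_mult cong_refl B.bx)
  also have "(\<Prod>rr\<in>P. 1 * (b ^ snd rr - b ^ fst rr) ^ x) = V ^ x" unfolding V_def VV_def P_def by (simp add: prod_power_distrib)
  finally have Tpart: "[(\<Prod>w\<in>T. y (snd w) - y (fst w)) = V ^ x] (mod p)" .
  have sumr: "(\<Prod>r<x. a ^ (r + 1)) = a ^ (x * (m + 1))"
  proof -
    have "2 * (\<Sum>r<x. r + 1) = 2 * (\<Sum>r<x. r) + 2 * x" by (simp only: sum_lessThan_plus1) simp
    also have "\<dots> = x * (x - 1) + 2 * x" using double_sum_lessThan[of x] by simp
    also have "\<dots> = 2 * (x * (m + 1))" using xm by (simp add: algebra_simps)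
    finally have h: "(\<Sum>r<x. r + 1) = x * (m + 1)" by simp
    have "(\<Prod>r<x. a ^ (r + 1)) = a ^ (\<Sum>r<x. r + 1)" by (rule power_sum[symmetric])
    also have "\<dots> = a ^ (x * (m + 1))" by (simp only: h)
    finally show ?thesis .
  qed
  have apart: "[(\<Prod>r<x. a ^ (r + 1)) ^ C = 1] (mod p)"
  proof -
    have "(\<Prod>r<x. a ^ (r + 1)) ^ C = (a ^ (x * x)) ^ ((m + 1) * m)"
      unfolding sumr C by (simp add: power_mult[symmetric] algebra_simps)
    also have "[\<dots> = 1 ^ ((m + 1) * m)] (mod p)" by (intro cong_pow ax)
    finally show ?thesis by simp
  qed
  have "VV R2 G y = (\<Prod>r<x. a ^ (r + 1)) ^ C * V ^ x * (\<Prod>w\<in>T. y (snd w) - y (fst w))"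
    using VR2 Spart by simp
  also have "[\<dots> = 1 * V ^ x * V ^ x] (mod p)" by (intro cong_mult apart Tpart cong_refl)
  also have "1 * V ^ x * V ^ x = (V ^ 2) ^ x" by (simp add: power_mult[symmetric] power_add[symmetric] mult_2)
  also have "[\<dots> = ((-1) ^ C * int x ^ x) ^ x] (mod p)"
    unfolding V_def C_def P_def by (intro cong_pow B.M)
  finally have VR2': "[VV R2 G y = ((-1) ^ C * int x ^ x) ^ x] (mod p)" .
  have "VV (<) {1..x*x} (\<lambda>e. a ^ e) = (-1) ^ (C * C) * VV R2 G y" using step1 step2 cardX by simp
  also have "[\<dots> = (-1) ^ (C * C) * ((-1) ^ C * int x ^ x) ^ x] (mod p)"
    by (intro cong_mult cong_refl VR2')
  also have "(-1) ^ (C * C) * ((-1) ^ C * int x ^ x) ^ x = (-1) ^ (C * C + C * x) * int x ^ (x * x)"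
    by (simp add: power_mult_distrib power_mult[symmetric] power_add)
  also have "even (C * C + C * x)"
  proof -
    have "C * C + C * x = x * x * (m * (m + 1))" unfolding C by (simp add: algebra_simps)
    then show ?thesis by simp
  qed
  then have "(-1) ^ (C * C + C * x) * int x ^ (x * x) = int x ^ (x * x)" by simp
  finally show ?thesis .
qed

end

lemma wfact:
  fixes p :: nat
  assumes p: "prime p" and k: "k < p"
  shows "[fact k * fact (p - 1 - k) = ((-1::int) ^ (k + 1))] (mod int p)"
  using k
proof (induction k)
  case 0
  have "[fact (p - 1) = (-1::int)] (mod int p)" using wilson_theorem[OF p] by simp
  then show ?case by simp
next
  case (Suc k)
  then have IH: "[fact k * fact (p - 1 - k) = ((-1::int) ^ (k + 1))] (mod int p)" by simp
  define X :: int where "X = fact k * fact (p - 1 - k)"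
  define Y :: int where "Y = fact (Suc k) * fact (p - 1 - Suc k)"
  define s :: int where "s = (-1) ^ (k + 1)"
  have pk: "p - 1 - k = Suc (p - 1 - Suc k)" using Suc.prems by simp
  have "X = (fact k * fact (p - 1 - Suc k)) * (int p - int (Suc k))"
    unfolding X_def pk using Suc.prems by (simp add: algebra_simps of_nat_diff)
  then have "X - (- Y) = int p * (fact k * fact (p - 1 - Suc k))"
    unfolding Y_def by (simp add: algebra_simps)
  then have h1: "int p dvd X - (- Y)" by simp
  have h2: "int p dvd X - s" using IH unfolding X_def s_def by (simp add: cong_iff_dvd_diff)
  have "Y - (- s) = (X - (- Y)) - (X - s)" by simp
  then have "int p dvd Y - (- s)" using h1 h2 by (metis dvd_diff)
  then show ?case unfolding Y_def s_def by (simp add: cong_iff_dvd_diff)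
qed


lemma Qind:
  fixes j t :: nat
  assumes "1 \<le> t" "t \<le> j"
  shows "(\<Prod>i\<in>{1..<t}. (int j)^2 - (int i)^2) * fact (j - t) * fact j = (fact (j - 1) * fact (j + t - 1) :: int)"
  using assms
proof (induction t rule: nat_induct_at_least)
  case base
  then show ?case by simp
next
  case (Suc t)
  then have IH: "(\<Prod>i\<in>{1..<t}. (int j)^2 - (int i)^2) * fact (j - t) * fact j = (fact (j - 1) * fact (j + t - 1) :: int)"
    by simp
  define Q where "Q = (\<Prod>i\<in>{1..<t}. (int j)^2 - (int i)^2)"
  have q: "(\<Prod>i\<in>{1..<Suc t}. (int j)^2 - (int i)^2) = Q * ((int j)^2 - (int t)^2)"
    unfolding Q_def using Suc.hyps by (simp add: prod.atLeastLessThan_Suc)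
  have f1: "(fact (j - t) :: int) = int (j - t) * fact (j - Suc t)"
  proof -
    have "j - t = Suc (j - Suc t)" using Suc.prems by simp
    then show ?thesis by (simp del: of_nat_diff)
  qed
  have f2: "(fact (j + Suc t - 1) :: int) = int (j + t) * fact (j + t - 1)"
  proof -
    have e: "j + Suc t - 1 = Suc (j + t - 1)" "Suc (j + t - 1) = j + t" using Suc.hyps by auto
    have "(fact (j + Suc t - 1)::int) = fact (Suc (j + t - 1))" using e(1) by simp
    also have "\<dots> = of_nat (Suc (j + t - 1)) * fact (j + t - 1)" by (rule fact_Suc)
    finally show ?thesis using e(2) by simp
  qed
  have jt: "(int j)^2 - (int t)^2 = int (j - t) * int (j + t)"
    using Suc.prems by (simp add: of_nat_diff power2_eq_square algebra_simps)
  have "(\<Prod>i\<in>{1..<Suc t}. (int j)^2 - (int i)^2) * fact (j - Suc t) * fact j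
      = (Q * fact (j - t) * fact j) * int (j + t)"
    unfolding q jt f1 by (simp add: algebra_simps)
  also have "\<dots> = fact (j - 1) * fact (j + Suc t - 1)"
    using IH unfolding Q_def[symmetric] f2 by (simp add: algebra_simps)
  finally show ?case .
qed

lemma Dj:
  fixes j :: nat
  assumes "1 \<le> j"
  shows "(\<Prod>i\<in>{1..<j}. (int j)^2 - (int i)^2) * int j = (fact (2 * j - 1) :: int)"
proof -
  have "(\<Prod>i\<in>{1..<j}. (int j)^2 - (int i)^2) * fact (j - j) * fact j = (fact (j - 1) * fact (j + j - 1) :: int)"
    using Qind[of j j] assms by simp
  moreover have "(fact j :: int) = int j * fact (j - 1)"
  proof -
    obtain j' where "j = Suc j'" using assms by (cases j) auto
    then show ?thesis by simp
  qed
  moreover have "(fact (j + j - 1) :: int) = fact (2 * j - 1)" by (simp add: mult_2)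
  ultimately have "fact (j - 1) * ((\<Prod>i\<in>{1..<j}. (int j)^2 - (int i)^2) * int j) = fact (j - 1) * (fact (2 * j - 1) :: int)"
    by (simp add: algebra_simps)
  moreover have "(fact (j - 1) :: int) \<noteq> 0" by simp
  ultimately show ?thesis by simp
qed

lemma pairing:
  fixes p h :: nat
  assumes p: "prime p" and ph: "p = 2 * h + 1" and h: "odd h"
  shows "[(\<Prod>j\<in>{1..h}. (fact (2 * j - 1) :: int)) = fact h] (mod int p)"
proof -
  obtain s where hs: "h = 2 * s + 1" using h oddE by blast
  define F where "F = (\<lambda>j::nat. (fact (2 * j - 1) :: int))"
  define g where "g = (\<lambda>j::nat. h + 1 - j)"
  have u: "{1..h} = {1..s} \<union> {s+1..h}" using hs by auto
  have split: "(\<Prod>j\<in>{1..h}. F j) = (\<Prod>j\<in>{1..s}. F j) * (\<Prod>j\<in>{s+1..h}. F j)"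
    unfolding u by (rule prod.union_disjoint) auto
  have bij: "bij_betw g {1..s+1} {s+1..h}"
  proof (rule bij_betw_imageI)
    show "inj_on g {1..s+1}" unfolding g_def inj_on_def using hs by auto
    show "g ` {1..s+1} = {s+1..h}"
    proof (intro equalityI subsetI)
      fix j assume "j \<in> g ` {1..s+1}" then show "j \<in> {s+1..h}" unfolding g_def using hs by auto
    next
      fix j assume j: "j \<in> {s+1..h}"
      then have "j = g (h + 1 - j)" "h + 1 - j \<in> {1..s+1}" unfolding g_def using hs by auto
      then show "j \<in> g ` {1..s+1}" by blast
    qed
  qed
  have "(\<Prod>j\<in>{s+1..h}. F j) = (\<Prod>j\<in>{1..s+1}. F (g j))"
    by (rule prod.reindex_bij_betw[OF bij, symmetric])
  also have "\<dots> = (\<Prod>j\<in>{1..s}. F (g j)) * F (g (s + 1))"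
    by (simp add: prod.cl_ivl_Suc)
  also have "F (g (s + 1)) = fact h" unfolding F_def g_def using hs by simp
  finally have r1: "(\<Prod>j\<in>{s+1..h}. F j) = (\<Prod>j\<in>{1..s}. F (g j)) * fact h" .
  have "(\<Prod>j\<in>{1..h}. F j) = (\<Prod>j\<in>{1..s}. F j * F (g j)) * fact h"
    unfolding split r1 prod.distrib by (simp add: algebra_simps)
  also have "[\<dots> = (\<Prod>j\<in>{1..s}. 1) * fact h] (mod int p)"
  proof (intro cong_mult cong_prod cong_refl)
    fix j assume j: "j \<in> {1..s}"
    have k: "2 * j - 1 < p" using j hs ph by auto
    have "p - 1 - (2 * j - 1) = 2 * g j - 1" unfolding g_def using j hs ph by auto
    then have "F j * F (g j) = fact (2 * j - 1) * fact (p - 1 - (2 * j - 1))" unfolding F_def by simp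
    also have "[\<dots> = (-1) ^ (2 * j - 1 + 1)] (mod int p)" by (rule wfact[OF p k])
    also have "(-1::int) ^ (2 * j - 1 + 1) = 1" using j by simp
    finally show "[F j * F (g j) = 1] (mod int p)" .
  qed
  finally show ?thesis unfolding F_def by simp
qed

lemma pow_h_sign:
  fixes p x y :: nat
  assumes p: "prime p" and px: "p = 2 * (x * x) + 1" and xodd: "odd x"
  shows "y dvd x \<Longrightarrow> [int y ^ (x * x) = (-1) ^ ((y - 1) div 2)] (mod int p)"
proof (induction y rule: less_induct)
  case (less y)
  have xpos: "x > 0" using xodd by (cases x) auto
  have ypos: "y > 0" using less.prems xpos by (cases y) auto
  have yodd: "odd y" using less.prems xodd by (auto dest: dvd_trans[of 2])
  have hodd: "odd (x * x)" using xodd by simp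
  show ?case
  proof (cases "y = 1")
    case True then show ?thesis by simp
  next
    case False
    obtain q where q: "prime q" "q dvd y" using prime_factor_nat[OF False] by blast
    obtain z where yz: "y = q * z" using q by (auto elim: dvdE)
    have q1: "q > 1" using q prime_gt_1_nat by blast
    have zpos: "z > 0" using yz ypos by (cases z) auto
    have zy: "z < y" using yz q1 zpos by simp
    have zx: "z dvd x" using less.prems yz by (metis dvd_mult_right)
    have qx: "q dvd x" using less.prems q(2) by (rule dvd_trans[rotated])
    have IH: "[int z ^ (x * x) = (-1) ^ ((z - 1) div 2)] (mod int p)" using less.IH[OF zy zx] .
    have qodd: "odd q" "odd z" using yodd yz by auto
    have q2: "2 < q" using q1 qodd(1) by (cases "q = 2") auto
    have qlex: "q \<le> x" using qx xpos by (simp add: dvd_imp_le)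
    have xlep: "x < p" using px xpos by (cases x) auto
    have p2: "2 < p" using px xpos by (cases x) auto
    have qp: "q \<noteq> p" using qlex xlep by simp
    have hp: "(p - 1) div 2 = x * x" using px by simp
    have L1: "[Legendre (int q) (int p) = int q ^ (x * x)] (mod int p)"
      using euler_criterion[OF p p2, of "int q"] hp by simp
    have pq1: "[int p = 1] (mod int q)"
    proof -
      have "q dvd 2 * (x * x)" using qx by simp
      then have "int q dvd int p - 1" using px by (metis add_diff_cancel_right' of_nat_1 of_nat_add of_nat_dvd_iff)
      then show ?thesis by (simp add: cong_iff_dvd_diff)
    qed
    have Lp: "Legendre (int p) (int q) = 1"
    proof -
      have "\<not> [int p = 0] (mod int q)"
      proof
        assume "[int p = 0] (mod int q)"
        then have "[1 = 0] (mod int q)" using pq1 by (metis cong_sym cong_trans)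
        then show False using q1 by (simp add: cong_iff_dvd_diff)
      qed
      moreover have "QuadRes (int q) (int p)" unfolding QuadRes_def
        by (rule exI[of _ 1]) (use pq1 in \<open>simp add: cong_sym\<close>)
      ultimately show ?thesis unfolding Legendre_def by simp
    qed
    have "Legendre (int q) (int p) * Legendre (int p) (int q) = (-1) ^ ((q - 1) div 2 * ((p - 1) div 2))"
      using Quadratic_Reciprocity[OF q(1) q2 p p2 qp] by (simp add: mult.commute)
    then have "Legendre (int q) (int p) = (-1) ^ ((x * x) * ((q - 1) div 2))"
      unfolding Lp hp by (simp add: mult.commute)
    also have "\<dots> = (-1) ^ ((q - 1) div 2)" using hodd by (simp add: power_mult)
    finally have Lq: "[int q ^ (x * x) = (-1) ^ ((q - 1) div 2)] (mod int p)"
      using L1 by (metis cong_sym)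
    have "int y ^ (x * x) = int q ^ (x * x) * int z ^ (x * x)" using yz by (simp add: power_mult_distrib)
    also have "[\<dots> = (-1) ^ ((q - 1) div 2) * (-1) ^ ((z - 1) div 2)] (mod int p)"
      by (intro cong_mult Lq IH)
    also have "(-1::int) ^ ((q - 1) div 2) * (-1) ^ ((z - 1) div 2) = (-1) ^ ((y - 1) div 2)"
    proof -
      obtain a where a: "q = 2 * a + 1" using qodd(1) oddE by blast
      obtain b where b: "z = 2 * b + 1" using qodd(2) oddE by blast
      have "(y - 1) div 2 = 2 * (a * b) + (a + b)" using yz a b by (simp add: algebra_simps)
      moreover have "(q - 1) div 2 = a" "(z - 1) div 2 = b" using a b by simp_all
      ultimately show ?thesis by (simp add: power_add power_mult)
    qed
    finally show ?thesis .
  qed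
qed

definition inv_cnt :: "(nat \<Rightarrow> nat) \<Rightarrow> nat set \<Rightarrow> nat" where
  "inv_cnt \<pi> A = card {(i,j). i \<in> A \<and> j \<in> A \<and> i < j \<and> \<pi> j < \<pi> i}"

lemma VV_perm:
  assumes fin: "finite A" and pi: "\<pi> permutes A"
  shows "VV (<) A (\<lambda>i. y (\<pi> i)) = (-1) ^ inv_cnt \<pi> A * VV (<) A y"
proof -
  have bij: "bij_betw \<pi> A A" using pi by (rule permutes_imp_bij)
  have inj: "inj_on \<pi> A" using bij by (auto simp: bij_betw_def)
  define R2 where "R2 = (\<lambda>i j. \<pi> i < \<pi> j)"
  have "VV (<) A (\<lambda>i. y (\<pi> i)) = (-1) ^ card {(i,j). i\<in>A \<and> j\<in>A \<and> i < j \<and> R2 j i} * VV R2 A (\<lambda>i. y (\<pi> i))"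
  proof (rule VV_two_orders[OF fin])
    fix i j assume "i \<in> A" "j \<in> A" "i \<noteq> j"
    then have "\<pi> i \<noteq> \<pi> j" using inj by (auto simp: inj_on_def)
    then show "R2 i j \<or> R2 j i" unfolding R2_def by auto
  qed (auto simp: R2_def)
  also have "VV R2 A (\<lambda>i. y (\<pi> i)) = VV (<) A y"
    by (rule VV_reindex[OF bij]) (simp add: R2_def)
  finally show ?thesis unfolding inv_cnt_def R2_def .
qed

lemma VV_int_nonzero: "finite A \<Longrightarrow> VV (<) A (\<lambda>i::nat. int i) \<noteq> 0"
proof -
  assume "finite A"
  then have f: "finite (prs (<) A)" by (rule finite_prs)
  show ?thesis unfolding VV_def prod_zero_iff[OF f] by (auto simp: prs_def)
qed

lemma eps_mult:
  assumes fin: "finite A" and pi: "\<pi> permutes A" and si: "\<sigma> permutes A"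
  shows "(-1::int) ^ inv_cnt (\<pi> \<circ> \<sigma>) A = (-1) ^ inv_cnt \<pi> A * (-1) ^ inv_cnt \<sigma> A"
proof -
  have ps: "\<pi> \<circ> \<sigma> permutes A" using pi si by (rule permutes_compose[rotated])
  have "VV (<) A (\<lambda>i. int ((\<pi> \<circ> \<sigma>) i)) = (-1) ^ inv_cnt (\<pi> \<circ> \<sigma>) A * VV (<) A int"
    by (rule VV_perm[OF fin ps])
  moreover have "VV (<) A (\<lambda>i. int ((\<pi> \<circ> \<sigma>) i)) = (-1) ^ inv_cnt \<sigma> A * VV (<) A (\<lambda>i. int (\<pi> i))"
    using VV_perm[OF fin si, of "\<lambda>i. int (\<pi> i)"] by simp
  moreover have "VV (<) A (\<lambda>i. int (\<pi> i)) = (-1) ^ inv_cnt \<pi> A * VV (<) A int"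
    by (rule VV_perm[OF fin pi])
  ultimately have "(-1) ^ inv_cnt (\<pi> \<circ> \<sigma>) A * VV (<) A int = ((-1) ^ inv_cnt \<pi> A * (-1) ^ inv_cnt \<sigma> A) * VV (<) A int"
    by (simp add: algebra_simps)
  moreover have "VV (<) A int \<noteq> 0" using VV_int_nonzero[OF fin] by simp
  ultimately show ?thesis by simp
qed

lemma inv_transpose:
  fixes a b :: nat
  assumes ab: "a < b" and A: "a \<in> A" "b \<in> A" and conv: "\<And>c. a \<le> c \<Longrightarrow> c \<le> b \<Longrightarrow> c \<in> A"
  shows "(-1::int) ^ inv_cnt (Transposition.transpose a b) A = -1"
proof -
  define t where "t = Transposition.transpose a b"
  have teq: "\<And>c. t c = (if c = a then b else if c = b then a else c)" unfolding t_def transpose_def by simp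
  have I: "{(i,j). i \<in> A \<and> j \<in> A \<and> i < j \<and> t j < t i} = (\<lambda>l. (a,l)) ` {a<..b} \<union> (\<lambda>k. (k,b)) ` {a<..<b}"
  proof (intro equalityI subsetI)
    fix q assume "q \<in> {(i,j). i \<in> A \<and> j \<in> A \<and> i < j \<and> t j < t i}"
    then obtain i j where q: "q = (i,j)" "i < j" "t j < t i" by blast
    show "q \<in> (\<lambda>l. (a,l)) ` {a<..b} \<union> (\<lambda>k. (k,b)) ` {a<..<b}"
    proof (cases "i = a")
      case True
      then have "j \<le> b" using q ab teq[of i] teq[of j] by (auto split: if_splits)
      then show ?thesis using q True by auto
    next
      case False
      then have "j = b \<and> a < i \<and> i < b" using q ab teq[of i] teq[of j] by (auto split: if_splits)
      then show ?thesis using q by auto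
    qed
  next
    fix q assume "q \<in> (\<lambda>l. (a,l)) ` {a<..b} \<union> (\<lambda>k. (k,b)) ` {a<..<b}"
    then show "q \<in> {(i,j). i \<in> A \<and> j \<in> A \<and> i < j \<and> t j < t i}"
      using ab A conv teq by auto
  qed
  have d: "(\<lambda>l. (a,l)) ` {a<..b} \<inter> (\<lambda>k. (k,b)) ` {a<..<b} = {}" by auto
  have "card ((\<lambda>l. (a,l)) ` {a<..b} \<union> (\<lambda>k. (k,b)) ` {a<..<b}) = (b - a) + (b - a - 1)"
    by (subst card_Un_disjoint[OF _ _ d]) (auto simp: card_image inj_on_def)
  then have "inv_cnt t A = 2 * (b - a) - 1" unfolding inv_cnt_def I using ab by simp
  moreover have "odd (2 * (b - a) - 1)" using ab by simp
  ultimately show ?thesis unfolding t_def by simp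
qed

lemma eps_sign:
  assumes fin: "finite A" and pi: "\<pi> permutes A"
    and conv: "\<And>a b c. a \<in> A \<Longrightarrow> b \<in> A \<Longrightarrow> a \<le> c \<Longrightarrow> c \<le> b \<Longrightarrow> c \<in> A"
  shows "(-1::int) ^ inv_cnt \<pi> A = sign \<pi>"
  using pi fin
proof (induction \<pi> rule: permutes_induct)
  case id
  have "{(i,j). i \<in> A \<and> j \<in> A \<and> i < j \<and> id j < id (i::nat)} = {}" by auto
  then have e: "inv_cnt id A = 0" unfolding inv_cnt_def by (metis card.empty)
  show ?case by (simp only: e sign_id power_0)
next
  case (swap a b p)
  have tperm: "Transposition.transpose a b permutes A" using swap by (simp add: permutes_swap_id)
  have "(-1::int) ^ inv_cnt (Transposition.transpose a b) A = -1"
  proof (cases "a < b")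
    case True then show ?thesis using inv_transpose[OF True swap(1,2)] conv swap by blast
  next
    case False
    then have ba: "b < a" using swap(3) by simp
    have "Transposition.transpose a b = Transposition.transpose b a" by (rule transpose_commute)
    then show ?thesis using inv_transpose[OF ba swap(2,1)] conv swap by metis
  qed
  then have "(-1::int) ^ inv_cnt (Transposition.transpose a b \<circ> p) A = - ((-1) ^ inv_cnt p A)"
    using eps_mult[OF fin tperm \<open>p permutes A\<close>] by simp
  also have "\<dots> = - sign p" using swap.IH by simp
  also have "\<dots> = sign (Transposition.transpose a b \<circ> p)"
    using swap(3) by (simp add: sign_compose permutation_swap_id permutes_imp_permutation[OF fin \<open>p permutes A\<close>] sign_swap_id)
  finally show ?case .
qed

lemma VV_nested:
  fixes A :: "nat set"
  assumes fin: "finite A"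
  shows "VV (<) A y = (\<Prod>j\<in>A. \<Prod>i\<in>{i\<in>A. i < j}. y j - y i)"
proof -
  define sw where "sw = (\<lambda>q::nat\<times>nat. (snd q, fst q))"
  have inj: "inj_on sw (SIGMA j:A. {i\<in>A. i < j})" unfolding sw_def inj_on_def by auto
  have e: "prs (<) A = sw ` (SIGMA j:A. {i\<in>A. i < j})"
  proof (intro equalityI subsetI)
    fix q assume "q \<in> prs (<) A"
    then obtain i j where q: "q = (i,j)" "i \<in> A" "j \<in> A" "i < j" unfolding prs_def by blast
    then have "(j,i) \<in> (SIGMA j:A. {i\<in>A. i < j})" by auto
    moreover have "q = sw (j,i)" unfolding sw_def q by simp
    ultimately show "q \<in> sw ` (SIGMA j:A. {i\<in>A. i < j})" by blast
  next
    fix q assume "q \<in> sw ` (SIGMA j:A. {i\<in>A. i < j})"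
    then show "q \<in> prs (<) A" unfolding sw_def prs_def by auto
  qed
  have "VV (<) A y = (\<Prod>q\<in>(SIGMA j:A. {i\<in>A. i < j}). y (fst q) - y (snd q))"
    unfolding VV_def e by (subst prod.reindex[OF inj]) (simp add: sw_def)
  also have "\<dots> = (\<Prod>(j,i)\<in>(SIGMA j:A. {i\<in>A. i < j}). y j - y i)" by (simp add: case_prod_beta)
  also have "\<dots> = (\<Prod>j\<in>A. \<Prod>i\<in>{i\<in>A. i < j}. y j - y i)"
    by (rule prod.Sigma[symmetric]) (use fin in auto)
  finally show ?thesis .
qed

lemma fact_int_prod: "(fact h :: int) = (\<Prod>j\<in>{1..h}. int j)"
  by (induction h) (simp_all add: prod.cl_ivl_Suc)

lemma D_value:
  fixes p h :: nat
  assumes p: "prime p" and ph: "p = 2 * h + 1" and h: "odd h"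
  shows "[VV (<) {1..h} (\<lambda>j. int j ^ 2) = 1] (mod int p)"
proof -
  define D where "D = VV (<) {1..h} (\<lambda>j. int j ^ 2)"
  have "D = (\<Prod>j\<in>{1..h}. \<Prod>i\<in>{i\<in>{1..h}. i < j}. int j ^ 2 - int i ^ 2)"
    unfolding D_def by (rule VV_nested) simp
  also have "\<dots> = (\<Prod>j\<in>{1..h}. \<Prod>i\<in>{1..<j}. int j ^ 2 - int i ^ 2)"
  proof (rule prod.cong[OF refl])
    fix j assume "j \<in> {1..h}"
    then have "{i\<in>{1..h}. i < j} = {1..<j}" by auto
    then show "(\<Prod>i\<in>{i\<in>{1..h}. i < j}. int j ^ 2 - int i ^ 2) = (\<Prod>i\<in>{1..<j}. int j ^ 2 - int i ^ 2)" by simp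
  qed
  finally have D: "D = (\<Prod>j\<in>{1..h}. \<Prod>i\<in>{1..<j}. int j ^ 2 - int i ^ 2)" .
  have "D * fact h = (\<Prod>j\<in>{1..h}. (\<Prod>i\<in>{1..<j}. int j ^ 2 - int i ^ 2) * int j)"
    unfolding D fact_int_prod by (simp add: prod.distrib)
  also have "\<dots> = (\<Prod>j\<in>{1..h}. (fact (2 * j - 1) :: int))"
    by (rule prod.cong[OF refl]) (use Dj in auto)
  also have "[\<dots> = fact h] (mod int p)" by (rule pairing[OF p ph h])
  finally have "[D * fact h = 1 * fact h] (mod int p)" by simp
  moreover have "coprime (fact h :: int) (int p)"
  proof -
    have "\<not> p dvd fact h" using prime_dvd_fact_iff[OF p] ph by simp
    then have "coprime p (fact h)" using p by (simp add: prime_imp_coprime)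
    then have "coprime (int p) (int (fact h))" by (simp only: coprime_int_iff)
    then show ?thesis by (simp add: coprime_commute)
  qed
  ultimately show ?thesis unfolding D_def using cong_mult_rcancel by blast
qed

theorem theorem1p1:
  fixes n p g :: nat
  assumes "n > 0"
    and "p = 18 * (2 * n + 1)^2 + 1"
    and "prime p"
    and "g < p"
    and "residue_primroot p g"
  shows "sign_on (half_set p) (tau p g) = (-1) ^ (n + 1)"
proof -
  note pdef = assms(2) and p = assms(3) and pr = assms(5)
  define x where "x = 3 * (2 * n + 1)"
  define h where "h = x * x"
  have xodd: "odd x" by (simp add: x_def)
  have ph: "p = 2 * h + 1" unfolding h_def x_def pdef by (simp add: power2_eq_square algebra_simps)
  have hodd: "odd h" using xodd h_def by simp
  have hpos: "h > 0" using hodd by (cases h) auto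
  have Hs: "half_set p = {1..h}" unfolding half_set_def ph by simp
  have p2: "p > 2" using ph hpos by simp
  have ordg: "ord p g = p - 1" using pr p by (simp add: residue_primroot_def totient_prime)
  have gcop: "coprime p g" using pr by (simp add: residue_primroot_def)
  have gpow: "[g ^ k = 1] (mod p) \<longleftrightarrow> 2 * h dvd k" for k
    using ord_divides[of g k p] ordg ph by simp
  define a where "a = int g ^ 2"
  have apow: "a ^ k = int (g ^ (2 * k))" for k unfolding a_def by (simp add: power_mult)
  have cyc: "cyc2 (int p) a x"
  proof
    show "prime (int p)" using p by simp
    show "odd x" by (rule xodd)
    have "[g ^ (2 * (x * x)) = 1] (mod p)" using gpow h_def by simp
    then show "[a ^ (x * x) = 1] (mod int p)" unfolding apow by (simp add: cong_int_iff[symmetric])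
    fix k assume k: "0 < k" "k < x * x"
    have "\<not> 2 * h dvd 2 * k" using k h_def by (auto dest: dvd_imp_le)
    then have "\<not> [g ^ (2 * k) = 1] (mod p)" using gpow by simp
    then show "\<not> [a ^ k = 1] (mod int p)" unfolding apow by (simp add: cong_int_iff[symmetric])
  qed
  have N: "[VV (<) {1..h} (\<lambda>e. a ^ e) = int x ^ h] (mod int p)"
    using cyc2.N_value[OF cyc] unfolding h_def .
  define t where "t = tau p g"
  have gb_nz: "g ^ b mod p \<noteq> 0" for b
  proof
    assume "g ^ b mod p = 0"
    then have "p dvd g ^ b" by auto
    then have "p dvd g" using p prime_dvd_power by blast
    then show False using gcop p by (metis coprime_absorb_left not_prime_unit)
  qed
  have rlt: "g ^ b mod p < p" for b using p2 by simp
  have t_in: "t b \<in> {1..h}" for b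
  proof -
    define r where "r = g ^ b mod p"
    have r: "0 < r" "r < p" using gb_nz[of b] rlt[of b] unfolding r_def by auto
    have tb: "t b = (if r \<in> {1..h} then r else p - r)" unfolding t_def tau_def Let_def Hs r_def by simp
    show ?thesis
    proof (cases "r \<in> {1..h}")
      case True
      then have "t b = r" using tb by auto
      then show ?thesis using True by simp
    next
      case False
      then have "t b = p - r" using tb by auto
      moreover have "h < r" using False r by auto
      ultimately show ?thesis using r ph by auto
    qed
  qed
  have t_sq: "[int (t b) ^ 2 = a ^ b] (mod int p)" for b
  proof -
    define r where "r = g ^ b mod p"
    have r: "r < p" unfolding r_def using rlt .
    have tb: "t b = (if r \<in> {1..h} then r else p - r)" unfolding t_def tau_def Let_def Hs r_def by simp
    have rg: "[int r = int g ^ b] (mod int p)" unfolding r_def cong_def by (simp add: of_nat_mod)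
    have "[int (t b) ^ 2 = int r ^ 2] (mod int p)"
    proof (cases "r \<in> {1..h}")
      case True
      then have "t b = r" using tb by auto
      then show ?thesis by simp
    next
      case False
      then have "t b = p - r" using tb by auto
      then have e: "int (t b) = int p - int r" using r by simp
      have "int (t b) ^ 2 = int r ^ 2 + int p * (int p - 2 * int r)"
        unfolding e by (simp add: power2_eq_square algebra_simps)
      then show ?thesis by (simp add: cong_iff_dvd_diff)
    qed
    also have "[int r ^ 2 = (int g ^ b) ^ 2] (mod int p)" by (intro cong_pow rg)
    also have "(int g ^ b) ^ 2 = a ^ b" unfolding a_def by (simp add: power_mult[symmetric] mult.commute)
    finally show ?thesis .
  qed
  have t_eq: "b = b'" if bb: "b \<in> {1..h}" "b' \<in> {1..h}" "b' \<le> b" "t b = t b'" for b b'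
  proof -
    have "[a ^ b = a ^ b'] (mod int p)"
      using t_sq[of b] t_sq[of b'] bb(4) by (metis cong_sym cong_trans)
    then have "[g ^ (2 * b) = g ^ (2 * b')] (mod p)" unfolding apow by (simp add: cong_int_iff[symmetric])
    moreover have "g ^ (2 * b) = g ^ (2 * b') * g ^ (2 * (b - b'))"
    proof -
      have e: "2 * b = 2 * b' + 2 * (b - b')" using bb(3) by simp
      show ?thesis by (subst e) (rule power_add)
    qed
    ultimately have "[g ^ (2 * b') * g ^ (2 * (b - b')) = g ^ (2 * b') * 1] (mod p)" by simp
    moreover have "coprime (g ^ (2 * b')) p" using gcop by (simp add: coprime_commute)
    ultimately have "[g ^ (2 * (b - b')) = 1] (mod p)" using cong_mult_lcancel_nat by blast
    then have "2 * h dvd 2 * (b - b')" using gpow by simp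
    then have "h dvd b - b'" by simp
    moreover have "b - b' < h" using bb by auto
    ultimately have "b - b' = 0" by (metis dvd_imp_le not_less neq0_conv)
    then show ?thesis using bb(3) by simp
  qed
  have t_inj: "inj_on t {1..h}"
  proof (rule inj_onI)
    fix b b' assume "b \<in> {1..h}" "b' \<in> {1..h}" "t b = t b'"
    then show "b = b'" using t_eq[of b b'] t_eq[of b' b] by (cases "b' \<le> b") auto
  qed
  have t_img: "t ` {1..h} = {1..h}" by (rule endo_inj_surj) (use t_in t_inj in auto)
  have t_bij: "bij_betw t {1..h} {1..h}" by (rule bij_betw_imageI[OF t_inj t_img])
  define \<pi> where "\<pi> = restrict_id t {1..h}"
  have pi: "\<pi> permutes {1..h}" unfolding \<pi>_def by (rule permutes_restrict_id[OF t_bij])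
  have sgn: "sign_on (half_set p) (tau p g) = sign \<pi>"
    unfolding Hs \<pi>_def t_def sign_on_def ..
  have eps: "(-1::int) ^ inv_cnt \<pi> {1..h} = sign \<pi>"
    by (rule eps_sign[OF _ pi]) auto
  define y where "y = (\<lambda>j::nat. int j ^ 2)"
  have VP: "VV (<) {1..h} (\<lambda>i. y (\<pi> i)) = sign \<pi> * VV (<) {1..h} y"
    using VV_perm[OF _ pi, of y] eps by simp
  have VC: "[VV (<) {1..h} (\<lambda>i. y (\<pi> i)) = VV (<) {1..h} (\<lambda>e. a ^ e)] (mod int p)"
    unfolding VV_def
  proof (rule cong_prod)
    fix q assume q: "q \<in> prs (<) {1..h}"
    then have "fst q \<in> {1..h}" "snd q \<in> {1..h}" unfolding prs_def by auto
    then have "\<pi> (fst q) = t (fst q)" "\<pi> (snd q) = t (snd q)" unfolding \<pi>_def by auto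
    then show "[y (\<pi> (snd q)) - y (\<pi> (fst q)) = a ^ snd q - a ^ fst q] (mod int p)"
      unfolding y_def by (simp add: cong_diff t_sq)
  qed
  have D: "[VV (<) {1..h} y = 1] (mod int p)" unfolding y_def by (rule D_value[OF p ph hodd])
  have "sign \<pi> = sign \<pi> * 1" by simp
  also have "[\<dots> = sign \<pi> * VV (<) {1..h} y] (mod int p)" by (intro cong_mult cong_refl cong_sym[OF D])
  also have "sign \<pi> * VV (<) {1..h} y = VV (<) {1..h} (\<lambda>i. y (\<pi> i))" using VP by simp
  also have "[\<dots> = int x ^ h] (mod int p)" using VC N by (rule cong_trans)
  also have "[int x ^ h = (-1) ^ ((x - 1) div 2)] (mod int p)"
    unfolding h_def by (rule pow_h_sign[OF p _ xodd]) (simp_all add: ph h_def)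
  also have "(-1::int) ^ ((x - 1) div 2) = (-1) ^ (n + 1)"
  proof -
    have "(x - 1) div 2 = 2 * n + (n + 1)" unfolding x_def by simp
    then show ?thesis by (simp add: power_add power_mult)
  qed
  finally have c: "[sign \<pi> = (-1) ^ (n + 1)] (mod int p)" .
  have "sign \<pi> = (-1) ^ (n + 1)"
  proof (rule ccontr)
    assume ne: "sign \<pi> \<noteq> (-1) ^ (n + 1)"
    have s: "sign \<pi> = 1 \<or> sign \<pi> = -1" by (simp add: sign_def)
    have e: "(-1::int) ^ (n + 1) = 1 \<or> (-1::int) ^ (n + 1) = -1" by (cases "even (n + 1)") auto
    have "int p dvd sign \<pi> - (-1) ^ (n + 1)" using c by (simp add: cong_iff_dvd_diff)
    then have "int p dvd 2 \<or> int p dvd -2" using s e ne by auto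
    then have "int p dvd 2" by auto
    then have "int p \<le> 2" by (auto dest: zdvd_imp_le)
    then show False using p2 by simp
  qed
  then show ?thesis using sgn by simp
qed

end
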